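(* Let $\pi\in\mathfrak{S}_m$ be in standard form. Then, as $k\to\infty$, $\left(r^\pi_{1+k(m-1),k}\right)^{1/k}=O\!\left(k^{m-\pi_m+\pi_1-1}\right)$.
   Context: The standardization $\operatorname{st}(w)$ of a word of distinct integers replaces its smallest entry by 1, the next smallest by 2, etc. For $\pi\in\mathfrak{S}_m$ and $\sigma\in\mathfrak{S}_n$, $\operatorname{Em}(\pi,\sigma)=\{i\in[n-m+1]:\operatorname{st}(\sigma_i\cdots\sigma_{i+m-1})=\pi\}$. The overlap set is $\mathcal{O}_\pi=\{i\in[m-1]:\operatorname{st}(\pi_{i+1}\cdots\pi_m)=\operatorname{st}(\pi_1\cdots\pi_{m-i})\}$. A $\pi$-cluster is a pair $(\sigma,S)$ with $\sigma\in\mathfrak{S}_n$ and $S=\{i_1<\dots<i_k\}\subseteq\operatorname{Em}(\pi,\sigma)$ such that $i_1=1$, $i_k=n-m+1$, and $i_{j+1}-i_j\in\mathcal{O}_\pi$ for all $j\in[k-1]$. The cluster number $r^\pi_{n,k}$ is the number of $\pi$-clusters $(\sigma,S)$ with $\sigma\in\mathfrak{S}_n$ and $|S|=k$. $\pi\in\mathfrak{S}_m$ is in standard form if $\pi_1<\pi_m$ and $\pi_1+\pi_m\le m+1$. *)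

theory Defs
  imports Complex_Main "HOL-Library.Landau_Symbols"
begin

text \<open>Permutations of [n] in one-line notation: lists of length n containing 1..n once.
  Positions are 1-indexed in the paper; list index i-1 corresponds to position i.\<close>

definition is_perm :: "nat list \<Rightarrow> nat \<Rightarrow> bool" where
  "is_perm w n \<longleftrightarrow> length w = n \<and> distinct w \<and> set w = {1..n}"

definition st :: "nat list \<Rightarrow> nat list" where
  "st w = map (\<lambda>x. card {y \<in> set w. y \<le> x}) w"

definition Em :: "nat list \<Rightarrow> nat list \<Rightarrow> nat set" where
  "Em p \<sigma> = {i. 1 \<le> i \<and> i + length p \<le> length \<sigma> + 1 \<and>
                 st (take (length p) (drop (i - 1) \<sigma>)) = p}"

definition overlaps :: "nat list \<Rightarrow> nat set" where
  "overlaps p = {i. 1 \<le> i \<and> i \<le> length p - 1 \<and>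
                    st (drop i p) = st (take (length p - i) p)}"

definition is_cluster :: "nat list \<Rightarrow> nat list \<Rightarrow> nat set \<Rightarrow> bool" where
  "is_cluster p \<sigma> S \<longleftrightarrow> finite S \<and> S \<subseteq> Em p \<sigma> \<and>
     (let l = sorted_list_of_set S in
        l \<noteq> [] \<and> hd l = 1 \<and> last l = length \<sigma> - length p + 1 \<and>
        (\<forall>j. j + 1 < length l \<longrightarrow> l ! (j + 1) - l ! j \<in> overlaps p))"

definition cluster_number :: "nat list \<Rightarrow> nat \<Rightarrow> nat \<Rightarrow> nat" where
  "cluster_number p n k =
     card {(\<sigma>, S). is_perm \<sigma> n \<and> is_cluster p \<sigma> S \<and> card S = k}"

definition standard_form :: "nat list \<Rightarrow> bool" where
  "standard_form p \<longleftrightarrow> p ! 0 < p ! (length p - 1) \<and>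
                        p ! 0 + p ! (length p - 1) \<le> length p + 1"

end

theory Submission
  imports Defs "HOL-Library.FuncSet"
begin

lemma st_order:
  assumes "st w = p" "i < length w" "j < length w"
  shows "w!i < w!j \<longleftrightarrow> p!i < p!j"
proof -
  have pi: "p!i = card {y\<in>set w. y \<le> w!i}" using assms(1)[symmetric] assms(2) unfolding st_def by simp
  have pj: "p!j = card {y\<in>set w. y \<le> w!j}" using assms(1)[symmetric] assms(3) unfolding st_def by simp
  have mj: "w!j \<in> set w" using assms(3) by simp
  show ?thesis
  proof
    assume lt: "w!i < w!j"
    have "{y\<in>set w. y \<le> w!i} \<subseteq> {y\<in>set w. y \<le> w!j}" using lt by auto
    moreover have "w!j \<notin> {y\<in>set w. y \<le> w!i}" using lt by auto
    moreover have "w!j \<in> {y\<in>set w. y \<le> w!j}" using mj by auto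
    ultimately have "{y\<in>set w. y \<le> w!i} \<subset> {y\<in>set w. y \<le> w!j}" by blast
    then show "p!i < p!j" unfolding pi pj by (intro psubset_card_mono) auto
  next
    assume lt: "p!i < p!j"
    show "w!i < w!j"
    proof (rule ccontr)
      assume "\<not> w!i < w!j"
      then have "{y\<in>set w. y \<le> w!j} \<subseteq> {y\<in>set w. y \<le> w!i}" by auto
      then have "p!j \<le> p!i" unfolding pi pj by (intro card_mono) auto
      then show False using lt by simp
    qed
  qed
qed

lemma cluster_S:
  assumes cl: "is_cluster p \<sigma> S" and cS: "card S = k" and l\<sigma>: "length \<sigma> = 1 + k*(m-1)"
    and lp: "length p = m" and m2: "m \<ge> 2"
  shows "S = (\<lambda>j. 1 + j*(m-1)) ` {..<k}" and "k \<ge> 1"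
proof -
  define l where "l = sorted_list_of_set S"
  from cl have fin: "finite S" and ne: "l \<noteq> []" and hd: "hd l = 1"
    and lst: "last l = length \<sigma> - length p + 1"
    and stp: "\<And>j. j+1 < length l \<Longrightarrow> l!(j+1) - l!j \<in> overlaps p"
    unfolding is_cluster_def l_def Let_def by auto
  have len: "length l = k" using fin cS by (simp add: l_def)
  have setl: "set l = S" using fin by (simp add: l_def)
  show k1: "k \<ge> 1" using ne len by (cases k) auto
  have l0: "l!0 = 1" using hd ne by (simp add: hd_conv_nth)
  have km: "k*(m-1) = (k-1)*(m-1) + (m-1)" using k1 by (cases k) auto
  have lk: "l!(k-1) = (k-1)*(m-1) + 1" using lst ne len l\<sigma> lp km m2
    by (simp add: last_conv_nth)
  have step: "l!(j+1) \<le> l!j + (m-1)" if "j+1 < k" for j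
  proof -
    have "l!(j+1) - l!j \<in> overlaps p" using stp that len by simp
    then have "l!(j+1) - l!j \<le> m - 1" using lp by (simp add: overlaps_def)
    then show ?thesis by arith
  qed
  have gen: "i \<le> j \<Longrightarrow> j < k \<Longrightarrow> l!j \<le> l!i + (j-i)*(m-1)" for i j
  proof (induction j)
    case 0 then show ?case by simp
  next
    case (Suc j)
    show ?case
    proof (cases "i = Suc j")
      case True then show ?thesis by simp
    next
      case False
      then have ij: "i \<le> j" using Suc by simp
      have "l!j \<le> l!i + (j-i)*(m-1)" using Suc ij by simp
      moreover have "l!(Suc j) \<le> l!j + (m-1)" using step[of j] Suc by simp
      moreover have "(Suc j - i)*(m-1) = (j-i)*(m-1) + (m-1)" using ij by (simp add: Suc_diff_le)
      ultimately show ?thesis by simp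
    qed
  qed
  have eq: "l!j = 1 + j*(m-1)" if "j < k" for j
  proof -
    have a: "l!j \<le> 1 + j*(m-1)" using gen[of 0 j] that l0 by simp
    have b: "l!(k-1) \<le> l!j + (k-1-j)*(m-1)" using gen[of j "k-1"] that by simp
    have c: "(k-1)*(m-1) = j*(m-1) + (k-1-j)*(m-1)" using that
      by (metis add_mult_distrib le_add_diff_inverse less_Suc_eq_le Suc_pred' k1 less_le_trans zero_less_one)
    show ?thesis using a b c lk by linarith
  qed
  show "S = (\<lambda>j. 1 + j*(m-1)) ` {..<k}"
    unfolding setl[symmetric] set_conv_nth len using eq by (auto intro!: exI)
qed


definition lev :: "nat list \<Rightarrow> nat \<Rightarrow> nat \<Rightarrow> nat" where
  "lev p d q = (q div d) * (p!d - p!0) + (p!(q mod d) - p!0)"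

definition chainp :: "nat list \<Rightarrow> nat \<Rightarrow> nat \<Rightarrow> bool" where
  "chainp p d q \<longleftrightarrow> p!0 \<le> p!(q mod d) \<and> p!(q mod d) \<le> p!d"

context
  fixes p :: "nat list" and m :: nat
  assumes perm_p: "is_perm p m" and sf: "standard_form p"
begin

lemma lp: "length p = m" using perm_p by (simp add: is_perm_def)

lemma m2: "m \<ge> 2"
proof (rule ccontr)
  assume "\<not> m \<ge> 2"
  then have "length p - 1 = 0" using lp by simp
  then show False using sf by (simp add: standard_form_def)
qed

lemma ab: "p!0 < p!(m-1)" using sf lp by (simp add: standard_form_def)

lemma pinj: "t < m \<Longrightarrow> t' < m \<Longrightarrow> p!t = p!t' \<Longrightarrow> t = t'"
  using perm_p by (simp add: is_perm_def nth_eq_iff_index_eq)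

lemma card_T: "card {t. t < m \<and> \<not> (p!0 \<le> p!t \<and> p!t \<le> p!(m-1))} \<le> m - p!(m-1) + p!0 - 1"
proof -
  let ?a = "p!0" and ?b = "p!(m-1)"
  have sp: "set p = {1..m}" using perm_p by (simp add: is_perm_def)
  have ain: "?a \<in> {1..m}" using sp lp m2 nth_mem[of 0 p] by simp
  have bin: "?b \<in> {1..m}" using sp lp m2 nth_mem[of "m-1" p] by simp
  let ?T = "{t. t < m \<and> \<not> (?a \<le> p!t \<and> p!t \<le> ?b)}"
  have inj: "inj_on (nth p) ?T" using perm_p lp by (intro inj_on_nth) (auto simp: is_perm_def)
  have sub: "nth p ` ?T \<subseteq> {1..m} - {?a..?b}"
  proof
    fix v assume "v \<in> nth p ` ?T"
    then obtain t where "t < m" "v = p!t" "\<not> (?a \<le> p!t \<and> p!t \<le> ?b)" by auto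
    then show "v \<in> {1..m} - {?a..?b}" using sp lp by (auto dest: nth_mem)
  qed
  have "card ?T = card (nth p ` ?T)" using inj by (simp add: card_image)
  also have "\<dots> \<le> card ({1..m} - {?a..?b})" using sub by (intro card_mono) auto
  also have "\<dots> = m - (?b + 1 - ?a)" using ain bin by (subst card_Diff_subset) auto
  also have "\<dots> = m - ?b + ?a - 1" using ain bin ab by auto
  finally show ?thesis .
qed

context
  fixes k :: nat and \<sigma> :: "nat list"
  assumes perm_s: "is_perm \<sigma> (1 + k*(m-1))"
    and win: "\<And>j. j < k \<Longrightarrow> st (take m (drop (j*(m-1)) \<sigma>)) = p"
begin

lemma ls: "length \<sigma> = 1 + k*(m-1)" using perm_s by (simp add: is_perm_def)

lemma wo:
  assumes "j < k" "t < m" "t' < m"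
  shows "\<sigma>!(j*(m-1)+t) < \<sigma>!(j*(m-1)+t') \<longleftrightarrow> p!t < p!t'"
proof -
  define w where "w = take m (drop (j*(m-1)) \<sigma>)"
  have "Suc j * (m-1) \<le> k*(m-1)" using assms(1) by (intro mult_le_mono1) simp
  then have le: "j*(m-1) + m \<le> length \<sigma>" using ls m2 by simp
  have lw: "length w = m" using le by (simp add: w_def)
  have wn: "\<And>s. s < m \<Longrightarrow> w!s = \<sigma>!(j*(m-1)+s)" using le by (simp add: w_def)
  have sw: "st w = p" using win[OF assms(1)] by (simp add: w_def)
  have "w!t < w!t' \<longleftrightarrow> p!t < p!t'" using st_order[OF sw] lw assms by simp
  then show ?thesis using wn assms by simp
qed

lemma xmono: "j < k \<Longrightarrow> \<sigma>!(j*(m-1)) < \<sigma>!(Suc j*(m-1))"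
proof -
  assume j: "j < k"
  have e: "Suc j*(m-1) = j*(m-1) + (m-1)" by simp
  show ?thesis using wo[OF j, of 0 "m-1"] ab m2 unfolding e by simp
qed

lemma xmono2: "j \<le> j' \<Longrightarrow> j' \<le> k \<Longrightarrow> \<sigma>!(j*(m-1)) \<le> \<sigma>!(j'*(m-1))"
proof (induction j')
  case 0 then show ?case by simp
next
  case (Suc j')
  show ?case
  proof (cases "j = Suc j'")
    case True then show ?thesis by simp
  next
    case False
    then have "\<sigma>!(j*(m-1)) \<le> \<sigma>!(j'*(m-1))" using Suc by simp
    also have "\<dots> < \<sigma>!(Suc j'*(m-1))" using xmono[of j'] Suc by simp
    finally show ?thesis by simp
  qed
qed

lemma chain_lt:
  assumes q: "q < 1 + k*(m-1)" and q': "q' < 1 + k*(m-1)"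
    and cq: "chainp p (m-1) q" and cq': "chainp p (m-1) q'" and ne: "q \<noteq> q'"
    and lv: "lev p (m-1) q \<le> lev p (m-1) q'"
  shows "\<sigma>!q < \<sigma>!q'"
proof -
  define d where "d = m - 1"
  have d0: "d > 0" and dm: "d < m" using m2 by (auto simp: d_def)
  define a where "a = p!0"
  define b where "b = p!d"
  define J where "J = q div d"
  define t where "t = q mod d"
  define J' where "J' = q' div d"
  define t' where "t' = q' mod d"
  have qe: "q = J*d + t" and q'e: "q' = J'*d + t'" by (simp_all add: J_def t_def J'_def t'_def)
  have td: "t < d" "t' < d" using d0 by (simp_all add: t_def t'_def)
  have tm: "t < m" "t' < m" using td dm by simp_all
  have ab': "a < b" using ab by (simp add: a_def b_def d_def)
  have ct: "a \<le> p!t" "p!t \<le> b" using cq by (simp_all add: chainp_def a_def b_def t_def d_def)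
  have ct': "a \<le> p!t'" "p!t' \<le> b" using cq' by (simp_all add: chainp_def a_def b_def t'_def d_def)
  have lq: "lev p (m-1) q = J*(b-a) + (p!t - a)" by (simp add: lev_def J_def t_def a_def b_def d_def)
  have lq': "lev p (m-1) q' = J'*(b-a) + (p!t' - a)" by (simp add: lev_def J'_def t'_def a_def b_def d_def)
  have qn: "q < 1 + k*d" "q' < 1 + k*d" using q q' by (simp_all add: d_def)
  have Jk: "J \<le> k" "J' \<le> k"
  proof -
    have "J*d \<le> k*d" using qe qn by linarith
    then show "J \<le> k" using d0 by simp
    have "J'*d \<le> k*d" using q'e qn by linarith
    then show "J' \<le> k" using d0 by simp
  qed
  have Jt: "J = k \<Longrightarrow> t = 0" using qe qn by simp
  have Jt': "J' = k \<Longrightarrow> t' = 0" using q'e qn by simp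
  have ptd: "p!t < p!d" using ct td tm dm pinj[of t d] by (fastforce simp: b_def)
  have pt'0: "t' \<noteq> 0 \<Longrightarrow> p!0 < p!t'" using ct' tm pinj[of 0 t'] m2 by (fastforce simp: a_def)
  consider "J < J'" | "J = J'" | "J' < J" by arith
  then show ?thesis
  proof cases
    case 1
    then have Jk1: "J < k" using Jk by simp
    have h1: "\<sigma>!q < \<sigma>!(Suc J*d)"
      using wo[OF Jk1 tm(1), of d] dm ptd qe by (simp add: d_def add.commute)
    have h2: "\<sigma>!(Suc J*d) \<le> \<sigma>!(J'*d)" using xmono2[of "Suc J" J'] 1 Jk by (simp add: d_def)
    have h3: "\<sigma>!(J'*d) \<le> \<sigma>!q'"
    proof (cases "t' = 0")
      case True then show ?thesis using q'e by simp
    next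
      case False
      then have "J' < k" using Jk Jt' by (cases "J' = k") auto
      then show ?thesis using wo[of J' 0 t'] tm pt'0 False q'e m2 by (simp add: d_def)
    qed
    show ?thesis using h1 h2 h3 by simp
  next
    case 2
    have Jk1: "J < k" using Jt Jt' 2 ne qe q'e Jk by (cases "J = k") auto
    have "t \<noteq> t'" using 2 ne qe q'e by auto
    then have "p!t \<noteq> p!t'" using pinj tm by blast
    moreover have "J*(b-a) + (p!t - a) \<le> J*(b-a) + (p!t' - a)" using lv lq lq' 2 by simp
    then have "p!t \<le> p!t'" using ct ct' by arith
    ultimately have "p!t < p!t'" by simp
    then show ?thesis using wo[OF Jk1 tm] qe q'e 2 by (simp add: d_def)
  next
    case 3
    have "Suc J' * (b-a) \<le> J*(b-a)" using 3 by (intro mult_le_mono1) simp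
    then have X: "J'*(b-a) + (b-a) \<le> J*(b-a)" by simp
    have "p!t' - a = b - a" using lv unfolding lq lq' using X ct' ab' by arith
    then have "p!t' = p!d" using ct' ab' by (simp add: b_def)
    then have "t' = d" using pinj tm dm by blast
    then show ?thesis using td by simp
  qed
qed

end
end


lemma order_determines:
  fixes f g :: "nat \<Rightarrow> nat"
  assumes fin: "finite A" and inj: "inj_on f A" "inj_on g A" and img: "f ` A = g ` A"
    and ord: "\<forall>x\<in>A. \<forall>y\<in>A. f x < f y \<longleftrightarrow> g x < g y" and x: "x \<in> A"
  shows "f x = g x"
proof -
  define B where "B = {y\<in>A. f y < f x}"
  have B': "B = {y\<in>A. g y < g x}" using ord x by (auto simp: B_def)
  have fB: "f ` B = {v \<in> f ` A. v < f x}" by (auto simp: B_def)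
  have gB: "g ` B = {v \<in> f ` A. v < g x}" unfolding img B' by auto
  have "card (f ` B) = card B" using inj(1) by (intro card_image inj_on_subset[OF inj(1)]) (auto simp: B_def)
  moreover have "card (g ` B) = card B" using inj(2) by (intro card_image inj_on_subset[OF inj(2)]) (auto simp: B_def)
  ultimately have eq: "card {v \<in> f ` A. v < f x} = card {v \<in> f ` A. v < g x}" using fB gB by simp
  have fx: "f x \<in> f ` A" and gx: "g x \<in> f ` A" using x img by auto
  show ?thesis
  proof (rule ccontr)
    assume "f x \<noteq> g x"
    then consider "f x < g x" | "g x < f x" by arith
    then show False
    proof cases
      case 1
      have "{v \<in> f ` A. v < f x} \<subset> {v \<in> f ` A. v < g x}" using 1 fx by auto
      then have "card {v \<in> f ` A. v < f x} < card {v \<in> f ` A. v < g x}" using fin by (intro psubset_card_mono) auto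
      then show False using eq by simp
    next
      case 2
      have "{v \<in> f ` A. v < g x} \<subset> {v \<in> f ` A. v < f x}" using 2 gx by auto
      then have "card {v \<in> f ` A. v < g x} < card {v \<in> f ` A. v < f x}" using fin by (intro psubset_card_mono) auto
      then show False using eq by simp
    qed
  qed
qed

lemma count_bound:
  assumes pp: "is_perm p m" and sfp: "standard_form p" and k1: "k \<ge> 1"
  shows "cluster_number p (1 + k*(m-1)) k \<le> (1 + k*(m-1)) ^ (k * (m - p!(m-1) + p!0 - 1))"
proof -
  define d where "d = m - 1"
  define n where "n = 1 + k*d"
  define e where "e = m - p!(m-1) + p!0 - 1"
  have lp': "length p = m" using lp[OF pp sfp] .
  have m2': "m \<ge> 2" using m2[OF pp sfp] .
  have d0: "d > 0" and dm: "d < m" using m2' by (auto simp: d_def)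
  define X where "X = {(\<sigma>, S). is_perm \<sigma> n \<and> is_cluster p \<sigma> S \<and> card S = k}"
  define N where "N = {q. q < n \<and> \<not> chainp p d q}"
  define C where "C = {q. q < n \<and> chainp p d q}"
  define h where "h = (\<lambda>(\<sigma>::nat list, S::nat set). restrict (nth \<sigma>) N)"
  have infoX: "S = (\<lambda>j. 1 + j*d) ` {..<k} \<and> (\<forall>j<k. st (take m (drop (j*d) \<sigma>)) = p)"
    if "(\<sigma>, S) \<in> X" for \<sigma> S
  proof -
    have cl: "is_cluster p \<sigma> S" and cS: "card S = k" and ps: "is_perm \<sigma> n" using that by (auto simp: X_def)
    have l: "length \<sigma> = 1 + k*(m-1)" using ps by (simp add: is_perm_def n_def d_def)
    have Se: "S = (\<lambda>j. 1 + j*d) ` {..<k}" using cluster_S(1)[OF cl cS l lp' m2'] by (simp add: d_def)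
    have "st (take m (drop (j*d) \<sigma>)) = p" if j: "j < k" for j
    proof -
      have "1 + j*d \<in> S" using Se j by auto
      then have "1 + j*d \<in> Em p \<sigma>" using cl by (auto simp: is_cluster_def)
      then show ?thesis using lp' by (simp add: Em_def)
    qed
    then show ?thesis using Se by simp
  qed
  have permX: "is_perm \<sigma> n" if "(\<sigma>, S) \<in> X" for \<sigma> S using that by (simp add: X_def)
  have inj: "inj_on h X"
  proof (rule inj_onI)
    fix x y assume x: "x \<in> X" and y: "y \<in> X" and hxy: "h x = h y"
    obtain \<sigma> S where xe: "x = (\<sigma>, S)" by (cases x)
    obtain \<sigma>' S' where ye: "y = (\<sigma>', S')" by (cases y)
    have SS: "S = S'" using infoX[of \<sigma> S] infoX[of \<sigma>' S'] x y xe ye by simp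
    have ws: "\<And>j. j < k \<Longrightarrow> st (take m (drop (j*(m-1)) \<sigma>)) = p"
      using infoX[of \<sigma> S] x xe by (simp add: d_def)
    have ws': "\<And>j. j < k \<Longrightarrow> st (take m (drop (j*(m-1)) \<sigma>')) = p"
      using infoX[of \<sigma>' S'] y ye by (simp add: d_def)
    have ps: "is_perm \<sigma> (1 + k*(m-1))" using permX[of \<sigma> S] x xe by (simp add: n_def d_def)
    have ps': "is_perm \<sigma>' (1 + k*(m-1))" using permX[of \<sigma>' S'] y ye by (simp add: n_def d_def)
    have len: "length \<sigma> = n" "length \<sigma>' = n" using ps ps' by (simp_all add: is_perm_def n_def d_def)
    have agree: "\<sigma>!i = \<sigma>'!i" if "i \<in> N" for i
    proof -
      have "restrict (nth \<sigma>) N i = restrict (nth \<sigma>') N i" using hxy xe ye by (simp add: h_def)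
      then show ?thesis using that by simp
    qed
    have ds: "distinct \<sigma>" "distinct \<sigma>'" using ps ps' by (simp_all add: is_perm_def)
    have ss: "set \<sigma> = {1..n}" "set \<sigma>' = {1..n}" using ps ps' by (simp_all add: is_perm_def n_def d_def)
    have injs: "inj_on (nth \<sigma>) {..<n}" "inj_on (nth \<sigma>') {..<n}" using ds len by (auto intro!: inj_on_nth)
    have CN: "C = {..<n} - N" by (auto simp: C_def N_def)
    have imgs: "nth xs ` {..<length xs} = set xs" for xs :: "nat list"
      by (auto simp: set_conv_nth)
    have img: "nth \<sigma> ` {..<n} = nth \<sigma>' ` {..<n}" using imgs[of \<sigma>] imgs[of \<sigma>'] ss len by simp
    have imgN: "nth \<sigma> ` N = nth \<sigma>' ` N" using agree by (auto intro: image_cong)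
    have NS: "N \<subseteq> {..<n}" by (auto simp: N_def)
    have imgC: "nth \<sigma> ` C = nth \<sigma>' ` C"
      unfolding CN using inj_on_image_set_diff[OF injs(1), of "{..<n}" N]
        inj_on_image_set_diff[OF injs(2), of "{..<n}" N] NS img imgN by auto
    have CS: "C \<subseteq> {..<n}" by (auto simp: C_def)
    have injC: "inj_on (nth \<sigma>) C" "inj_on (nth \<sigma>') C" using injs CS by (auto intro: inj_on_subset)
    have ord: "\<forall>x\<in>C. \<forall>y\<in>C. \<sigma>!x < \<sigma>!y \<longleftrightarrow> \<sigma>'!x < \<sigma>'!y"
    proof (intro ballI)
      fix x y assume xC: "x \<in> C" and yC: "y \<in> C"
      have xn: "x < 1 + k*(m-1)" "chainp p (m-1) x" using xC by (auto simp: C_def n_def d_def)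
      have yn: "y < 1 + k*(m-1)" "chainp p (m-1) y" using yC by (auto simp: C_def n_def d_def)
      show "\<sigma>!x < \<sigma>!y \<longleftrightarrow> \<sigma>'!x < \<sigma>'!y"
      proof (cases "x = y")
        case True then show ?thesis by simp
      next
        case False
        show ?thesis
        proof (cases "lev p (m-1) x \<le> lev p (m-1) y")
          case True
          then show ?thesis using chain_lt[OF pp sfp ps ws xn(1) yn(1) xn(2) yn(2) False]
            chain_lt[OF pp sfp ps' ws' xn(1) yn(1) xn(2) yn(2) False] by simp
        next
          case F: False
          then have "lev p (m-1) y \<le> lev p (m-1) x" by simp
          then show ?thesis using chain_lt[OF pp sfp ps ws yn(1) xn(1) yn(2) xn(2) not_sym[OF False]]
            chain_lt[OF pp sfp ps' ws' yn(1) xn(1) yn(2) xn(2) not_sym[OF False]] by auto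
        qed
      qed
    qed
    have "\<sigma> = \<sigma>'"
    proof (rule nth_equalityI)
      show "length \<sigma> = length \<sigma>'" using len by simp
      fix i assume "i < length \<sigma>"
      then have i: "i < n" using len by simp
      show "\<sigma>!i = \<sigma>'!i"
      proof (cases "i \<in> N")
        case True then show ?thesis using agree by simp
      next
        case False
        then have "i \<in> C" using i by (auto simp: N_def C_def)
        then show ?thesis using order_determines[OF _ injC imgC ord] CS by (auto intro: finite_subset)
      qed
    qed
    then show "x = y" using SS xe ye by simp
  qed
  have sub: "h ` X \<subseteq> (\<Pi>\<^sub>E i\<in>N. {1..n})"
  proof
    fix z assume "z \<in> h ` X"
    then obtain \<sigma> S where "(\<sigma>, S) \<in> X" "z = restrict (nth \<sigma>) N" by (auto simp: h_def)
    moreover have "\<And>i. i \<in> N \<Longrightarrow> \<sigma>!i \<in> {1..n}"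
      using permX[OF calculation(1)] by (auto simp: is_perm_def N_def)
    ultimately show "z \<in> (\<Pi>\<^sub>E i\<in>N. {1..n})" by auto
  qed
  have finN: "finite N" by (auto simp: N_def)
  have "card X \<le> card (\<Pi>\<^sub>E i\<in>N. {1..n})"
    using card_inj_on_le[OF inj sub] finN by (simp add: finite_PiE)
  also have "\<dots> = n ^ card N" using finN by (simp add: card_PiE)
  also have "card N \<le> k * e"
  proof -
    define T where "T = {t. t < m \<and> \<not> (p!0 \<le> p!t \<and> p!t \<le> p!(m-1))}"
    define f where "f = (\<lambda>q. (q div d, q mod d))"
    have injf: "inj_on f N"
    proof (rule inj_onI)
      fix x y assume "f x = f y"
      then have "x div d = y div d" "x mod d = y mod d" by (auto simp: f_def)
      then show "x = y" by (metis div_mult_mod_eq)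
    qed
    have fsub: "f ` N \<subseteq> {..<k} \<times> T"
    proof
      fix z assume "z \<in> f ` N"
      then obtain q where q: "q \<in> N" "z = f q" by auto
      have qn: "q < 1 + k*d" and nc: "\<not> chainp p d q" using q by (auto simp: N_def n_def)
      have qm: "q mod d < m" using d0 dm by (meson mod_less_divisor less_trans)
      have "q div d < k"
      proof (rule ccontr)
        assume "\<not> q div d < k"
        then have "k*d \<le> q div d * d" by simp
        also have "\<dots> \<le> q" by (metis div_mult_mod_eq le_add1)
        finally have "q = k*d" using qn by simp
        then have "q mod d = 0" by simp
        then show False using nc ab[OF pp sfp] by (simp add: chainp_def d_def)
      qed
      moreover have "q mod d \<in> T" using qm nc by (simp add: T_def chainp_def d_def)
      ultimately show "z \<in> {..<k} \<times> T" using q by (simp add: f_def)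
    qed
    have "card N = card (f ` N)" using injf by (simp add: card_image)
    also have "\<dots> \<le> card ({..<k} \<times> T)" using fsub by (intro card_mono) (auto simp: T_def)
    also have "\<dots> = k * card T" by (simp add: card_cartesian_product)
    also have "\<dots> \<le> k * e" using card_T[OF pp sfp] by (simp add: T_def e_def)
    finally show ?thesis .
  qed
  then have "n ^ card N \<le> n ^ (k*e)" by (intro power_increasing) (auto simp: n_def)
  finally show ?thesis by (simp add: X_def cluster_number_def n_def d_def e_def)
qed

theorem lemma4p2:
  fixes p :: "nat list" and m :: nat
  assumes "is_perm p m" and "standard_form p"
  shows "(\<lambda>k::nat. real (cluster_number p (1 + k * (m - 1)) k) powr (1 / real k))
           \<in> O(\<lambda>k. real k ^ (m - p ! (m - 1) + p ! 0 - 1))"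
proof
  define e where "e = m - p ! (m - 1) + p ! 0 - 1"
  show "\<forall>\<^sub>F k in at_top. norm (real (cluster_number p (1 + k * (m - 1)) k) powr (1 / real k))
      \<le> real m ^ e * norm (real k ^ (m - p ! (m - 1) + p ! 0 - 1))"
    using eventually_ge_at_top[of "1::nat"]
  proof eventually_elim
    case (elim k)
    define n where "n = 1 + k*(m-1)"
    have m2': "m \<ge> 2" using m2[OF assms] .
    have "n > 0" by (simp add: n_def)
    then have npos: "real n > 0" by simp
    have cb0: "cluster_number p n k \<le> n ^ (k*e)"
      using count_bound[OF assms elim] unfolding n_def e_def .
    have cb: "real (cluster_number p n k) \<le> real n ^ (k*e)"
      using cb0 by (metis of_nat_le_iff of_nat_power)
    have "real (cluster_number p n k) powr (1 / real k) \<le> (real n ^ (k*e)) powr (1 / real k)"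
      by (intro powr_mono2 cb) auto
    also have "\<dots> = real n ^ e"
    proof -
      have "(real n ^ (k*e)) powr (1 / real k) = (real n powr real (k*e)) powr (1 / real k)"
        using npos by (simp only: powr_realpow)
      also have "\<dots> = real n powr (real (k*e) * (1 / real k))" by (simp add: powr_powr)
      also have "real (k*e) * (1 / real k) = real e" using elim by (simp add: field_simps)
      also have "real n powr real e = real n ^ e" using npos by (simp add: powr_realpow)
      finally show ?thesis .
    qed
    also have "\<dots> \<le> (real m * real k) ^ e"
    proof (intro power_mono)
      have "k*(m-1) + k = k*m" using m2' by (cases m) (auto simp: algebra_simps)
      then have "n \<le> m * k" using elim unfolding n_def by (simp add: mult.commute)
      then show "real n \<le> real m * real k" by (metis of_nat_le_iff of_nat_mult)
    qed auto
    also have "\<dots> = real m ^ e * real k ^ e" by (simp add: power_mult_distrib)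
    finally show ?case by (simp add: n_def e_def)
  qed
qed

end
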